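(* Let $g$ be a function on $[-\pi,\pi]$ of the form $$g(\lambda)=h(\lambda)\,|\lambda-\lambda_1|^{\alpha(1)}\cdots|\lambda-\lambda_r|^{\alpha(r)},$$ where $r\in\mathbb{N}$, $\lambda_1,\dots,\lambda_r\in[-\pi,\pi]$, $\alpha(1),\dots,\alpha(r)\ge0$, and $h$ is a nonnegative measurable function, integrable over $[-\pi,\pi]$, continuous at $\lambda=0$, with a positive lower bound. Then for every $\epsilon>0$ there exists a trigonometric polynomial $t(\lambda)$ such that $0\le t(\lambda)\le g(\lambda)$ for all $\lambda\in[-\pi,\pi]$ and $t(0)\ge g(0)-\epsilon$. *)

theory Defs
  imports "HOL-Analysis.Analysis"
begin

text \<open>Real power with the convention x^0 = 1 (Isabelle's powr has 0 powr 0 = 0).\<close>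
definition rpow0 :: "real \<Rightarrow> real \<Rightarrow> real" where
  "rpow0 x a = (if a = 0 then 1 else x powr a)"

definition trig_poly :: "(real \<Rightarrow> real) \<Rightarrow> bool" where
  "trig_poly t \<longleftrightarrow> (\<exists>n::nat. \<exists>a b :: nat \<Rightarrow> real.
     \<forall>x. t x = (\<Sum>k\<le>n. a k * cos (real k * x) + b k * sin (real k * x)))"

end

theory Submission
  imports Defs
begin

lemma trig_poly_pad:
  assumes "n \<le> m"
  shows "(\<Sum>k\<le>n. a k * cos (real k * x) + b k * sin (real k * x)) =
         (\<Sum>k\<le>m. (if k \<le> n then a k else 0) * cos (real k * x) + (if k \<le> n then b k else 0) * sin (real k * x))"
proof -
  have "(\<Sum>k\<le>m. (if k \<le> n then a k else 0) * cos (real k * x) + (if k \<le> n then b k else 0) * sin (real k * x))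
     = (\<Sum>k\<le>m. if k \<le> n then a k * cos (real k * x) + b k * sin (real k * x) else 0)"
    by (rule sum.cong) auto
  also have "\<dots> = (\<Sum>k\<in>{k\<in>{..m}. k \<le> n}. a k * cos (real k * x) + b k * sin (real k * x))"
    by (rule sum.inter_filter[symmetric]) auto
  also have "{k\<in>{..m}. k \<le> n} = {..n}" using assms by auto
  finally show ?thesis by simp
qed

lemma trig_poly_add:
  assumes "trig_poly f" "trig_poly g"
  shows "trig_poly (\<lambda>x. f x + g x)"
proof -
  obtain n1 a1 b1 where f: "\<forall>x. f x = (\<Sum>k\<le>n1. a1 k * cos (real k * x) + b1 k * sin (real k * x))"
    using assms(1) unfolding trig_poly_def by blast
  obtain n2 a2 b2 where g: "\<forall>x. g x = (\<Sum>k\<le>n2. a2 k * cos (real k * x) + b2 k * sin (real k * x))"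
    using assms(2) unfolding trig_poly_def by blast
  define m where "m = max n1 n2"
  define a where "a k = (if k \<le> n1 then a1 k else 0) + (if k \<le> n2 then a2 k else 0)" for k
  define b where "b k = (if k \<le> n1 then b1 k else 0) + (if k \<le> n2 then b2 k else 0)" for k
  have "\<forall>x. f x + g x = (\<Sum>k\<le>m. a k * cos (real k * x) + b k * sin (real k * x))"
  proof
    fix x
    have "f x + g x = (\<Sum>k\<le>m. (if k \<le> n1 then a1 k else 0) * cos (real k * x) + (if k \<le> n1 then b1 k else 0) * sin (real k * x))
       + (\<Sum>k\<le>m. (if k \<le> n2 then a2 k else 0) * cos (real k * x) + (if k \<le> n2 then b2 k else 0) * sin (real k * x))"
      using f g trig_poly_pad[of n1 m a1 x b1] trig_poly_pad[of n2 m a2 x b2] unfolding m_def by simp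
    also have "\<dots> = (\<Sum>k\<le>m. a k * cos (real k * x) + b k * sin (real k * x))"
      unfolding a_def b_def sum.distrib[symmetric] by (rule sum.cong) (auto simp: algebra_simps)
    finally show "f x + g x = (\<Sum>k\<le>m. a k * cos (real k * x) + b k * sin (real k * x))" .
  qed
  then show ?thesis unfolding trig_poly_def by blast
qed

lemma trig_poly_scale:
  assumes "trig_poly f"
  shows "trig_poly (\<lambda>x. c * f x)"
proof -
  obtain n a b where f: "\<forall>x. f x = (\<Sum>k\<le>n. a k * cos (real k * x) + b k * sin (real k * x))"
    using assms(1) unfolding trig_poly_def by blast
  have "\<forall>x. c * f x = (\<Sum>k\<le>n. (c * a k) * cos (real k * x) + (c * b k) * sin (real k * x))"
    using f by (simp add: sum_distrib_left algebra_simps)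
  then show ?thesis unfolding trig_poly_def
    by (intro exI[of _ n] exI[of _ "\<lambda>k. c * a k"] exI[of _ "\<lambda>k. c * b k"]) simp
qed

lemma trig_poly_const: "trig_poly (\<lambda>x. c)"
proof -
  show ?thesis unfolding trig_poly_def
    by (intro exI[of _ 0] exI[of _ "\<lambda>k. c"] exI[of _ "\<lambda>k. 0"]) simp
qed

lemma trig_poly_sum:
  assumes "finite A" "\<And>i. i \<in> A \<Longrightarrow> trig_poly (f i)"
  shows "trig_poly (\<lambda>x. \<Sum>i\<in>A. f i x)"
  using assms
proof (induction A rule: finite_induct)
  case empty then show ?case using trig_poly_const[of 0] by simp
next
  case (insert a A)
  then show ?case using trig_poly_add[of "f a" "\<lambda>x. \<Sum>i\<in>A. f i x"] by simp
qed

lemma trig_poly_cos_nat: "trig_poly (\<lambda>x. cos (real m * x))"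
proof -
  have "cos (real m * x) = (\<Sum>k\<le>m. (\<lambda>k. if k = m then 1 else 0) k * cos (real k * x) + (\<lambda>k. 0) k * sin (real k * x))" for x
  proof -
    have "(\<Sum>k\<le>m. (\<lambda>k. if k = m then 1 else 0) k * cos (real k * x) + (\<lambda>k. 0) k * sin (real k * x)) = (\<Sum>k\<le>m. if k = m then cos (real k * x) else 0)"
      by (rule sum.cong) auto
    then show ?thesis by simp
  qed
  then show ?thesis unfolding trig_poly_def by (intro exI[of _ m] exI[of _ "\<lambda>k. if k = m then 1 else 0"] exI[of _ "\<lambda>k. 0"]) simp
qed

lemma trig_poly_sin_nat: "trig_poly (\<lambda>x. sin (real m * x))"
proof -
  have "sin (real m * x) = (\<Sum>k\<le>m. (\<lambda>k. 0) k * cos (real k * x) + (\<lambda>k. if k = m then 1 else 0) k * sin (real k * x))" for x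
  proof -
    have "(\<Sum>k\<le>m. (\<lambda>k. 0) k * cos (real k * x) + (\<lambda>k. if k = m then 1 else 0) k * sin (real k * x)) = (\<Sum>k\<le>m. if k = m then sin (real k * x) else 0)"
      by (rule sum.cong) auto
    then show ?thesis by simp
  qed
  then show ?thesis unfolding trig_poly_def by (intro exI[of _ m] exI[of _ "\<lambda>k. 0"] exI[of _ "\<lambda>k. if k = m then 1 else 0"]) simp
qed

lemma trig_poly_cos_int: "trig_poly (\<lambda>x. cos (real_of_int m * x))"
proof -
  have "cos (real_of_int m * x) = cos (real (nat \<bar>m\<bar>) * x)" for x
  proof (cases "m \<ge> 0")
    case True then show ?thesis by simp
  next
    case False
    then have "real_of_int m * x = - (real (nat \<bar>m\<bar>) * x)" by simp
    then show ?thesis by (simp only: cos_minus)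
  qed
  then show ?thesis using trig_poly_cos_nat[of "nat \<bar>m\<bar>"] by simp
qed

lemma trig_poly_sin_int: "trig_poly (\<lambda>x. sin (real_of_int m * x))"
proof -
  have "sin (real_of_int m * x) = (if m \<ge> 0 then 1 else -1) * sin (real (nat \<bar>m\<bar>) * x)" for x
  proof (cases "m \<ge> 0")
    case True then show ?thesis by simp
  next
    case False
    then have "real_of_int m * x = - (real (nat \<bar>m\<bar>) * x)" by simp
    then show ?thesis using False by (simp only: sin_minus) simp
  qed
  then show ?thesis using trig_poly_scale[OF trig_poly_sin_nat[of "nat \<bar>m\<bar>"], of "if m \<ge> 0 then 1 else -1"] by simp
qed

lemma trig_poly_mono_mult:
  fixes i j :: nat and c d e f :: real
  shows "trig_poly (\<lambda>x. (c * cos (real i * x) + d * sin (real i * x)) * (e * cos (real j * x) + f * sin (real j * x)))"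
proof -
  define p where "p = real_of_int (int i + int j)"
  define q where "q = real_of_int (int i - int j)"
  have eq: "(c * cos (real i * x) + d * sin (real i * x)) * (e * cos (real j * x) + f * sin (real j * x))
     = (c*e/2) * (cos (q * x) + cos (p * x)) + (d*f/2) * (cos (q * x) - cos (p * x))
       + (d*e/2) * (sin (p * x) + sin (q * x)) + (c*f/2) * (sin (p * x) - sin (q * x))" for x
  proof -
    have px: "p * x = real i * x + real j * x" and qx: "q * x = real i * x - real j * x"
      unfolding p_def q_def by (simp_all add: algebra_simps)
    show ?thesis unfolding px qx cos_add cos_diff sin_add sin_diff by (simp add: algebra_simps)
  qed
  have tp: "trig_poly (\<lambda>x. cos (p * x))" "trig_poly (\<lambda>x. cos (q * x))"
       "trig_poly (\<lambda>x. sin (p * x))" "trig_poly (\<lambda>x. sin (q * x))"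
    unfolding p_def q_def by (rule trig_poly_cos_int trig_poly_sin_int)+
  have m1: "trig_poly (\<lambda>x. - h x)" if "trig_poly h" for h
    using trig_poly_scale[OF that, of "-1"] by simp
  have "trig_poly (\<lambda>x. (c*e/2) * (cos (q * x) + cos (p * x)) + (d*f/2) * (cos (q * x) - cos (p * x))
       + (d*e/2) * (sin (p * x) + sin (q * x)) + (c*f/2) * (sin (p * x) - sin (q * x)))"
    unfolding diff_conv_add_uminus
    by (intro trig_poly_add trig_poly_scale m1 tp)
  then show ?thesis unfolding eq .
qed

lemma trig_poly_mult:
  assumes "trig_poly f" "trig_poly g"
  shows "trig_poly (\<lambda>x. f x * g x)"
proof -
  obtain n1 a1 b1 where f: "\<forall>x. f x = (\<Sum>k\<le>n1. a1 k * cos (real k * x) + b1 k * sin (real k * x))"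
    using assms(1) unfolding trig_poly_def by blast
  obtain n2 a2 b2 where g: "\<forall>x. g x = (\<Sum>k\<le>n2. a2 k * cos (real k * x) + b2 k * sin (real k * x))"
    using assms(2) unfolding trig_poly_def by blast
  have eq: "f x * g x = (\<Sum>i\<le>n1. \<Sum>j\<le>n2. (a1 i * cos (real i * x) + b1 i * sin (real i * x)) * (a2 j * cos (real j * x) + b2 j * sin (real j * x)))" for x
    using f g by (simp add: sum_product)
  show ?thesis unfolding eq
    by (intro trig_poly_sum trig_poly_mono_mult) auto
qed

lemma trig_poly_power:
  assumes "trig_poly f"
  shows "trig_poly (\<lambda>x. f x ^ n)"
  by (induction n) (auto intro: trig_poly_mult[OF assms] trig_poly_const[of 1])

lemma trig_poly_prod:
  assumes "finite A" "\<And>i. i \<in> A \<Longrightarrow> trig_poly (f i)"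
  shows "trig_poly (\<lambda>x. \<Prod>i\<in>A. f i x)"
  using assms
proof (induction A rule: finite_induct)
  case empty then show ?case using trig_poly_const[of 1] by simp
next
  case (insert a A)
  then show ?case using trig_poly_mult[of "f a" "\<lambda>x. \<Prod>i\<in>A. f i x"] by simp
qed

lemma trig_poly_cos_shift: "trig_poly (\<lambda>x. cos (x - l))"
proof -
  have "cos (x - l) = cos l * cos (real (1::nat) * x) + sin l * sin (real (1::nat) * x)" for x
    by (simp add: cos_diff)
  then show ?thesis
    by (simp only:) (intro trig_poly_add trig_poly_scale trig_poly_cos_nat trig_poly_sin_nat)
qed


lemma one_minus_cos_le: "1 - cos (y::real) \<le> y\<^sup>2"
proof -
  have "cos y = 1 - 2 * sin (y/2) ^ 2" using cos_double_sin[of "y/2"] by simp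
  moreover have "sin (y/2) ^ 2 \<le> (y/2)^2"
    using abs_sin_x_le_abs_x[of "y/2"] by (metis abs_ge_zero power2_abs power_mono)
  ultimately have "cos y = 1 - 2 * sin (y/2) ^ 2" "sin (y/2) ^ 2 * 4 \<le> y\<^sup>2"
    by (simp_all add: power_divide)
  then show ?thesis using zero_le_power2[of "sin (y/2)"] by linarith
qed

lemma cos_lt_1_pi: assumes "l \<in> {-pi..pi}" "l \<noteq> 0" shows "cos l < 1"
proof -
  have "cos l \<noteq> 1"
  proof
    assume "cos l = 1"
    then have "\<exists>n::int. l = of_int n * 2 * pi" by (simp only: cos_one_2pi_int)
    then obtain n :: int where n: "l = of_int n * 2 * pi" by blast
    have "\<bar>real_of_int n\<bar> * (2 * pi) \<le> pi" using assms(1) n by (auto simp: abs_mult)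
    then have "\<bar>real_of_int n\<bar> * 2 \<le> 1" using pi_gt_zero by (simp add: mult.assoc[symmetric])
    then have "n = 0" by linarith
    with n assms(2) show False by simp
  qed
  then show ?thesis using cos_le_one[of l] by linarith
qed

lemma factor_bound:
  assumes "alpha > 0" "D > 0" "k = nat \<lceil>alpha\<rceil>" "y \<ge> 0" "y \<le> 2 * pi" "\<bar>y'\<bar> = y"
  shows "((1 - cos y') / D) ^ k \<le> ((2*pi) powr (2 * real k - alpha) / D ^ k) * y powr alpha"
proof -
  have k1: "k \<ge> 1" using assms by linarith
  have ka: "2 * real k - alpha \<ge> 0" using assms by linarith
  have y2: "y'\<^sup>2 = y\<^sup>2" using assms(6) by (metis power2_abs)
  have c0: "0 \<le> 1 - cos y'" using cos_le_one[of y'] by linarith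
  have "(1 - cos y') ^ k \<le> (y\<^sup>2) ^ k"
    using one_minus_cos_le[of y'] y2 c0 by (intro power_mono) auto
  also have "\<dots> \<le> (2*pi) powr (2 * real k - alpha) * y powr alpha"
  proof (cases "y = 0")
    case True then show ?thesis using k1 by (simp add: zero_power)
  next
    case False
    then have yp: "y > 0" using assms by simp
    have "(y\<^sup>2) ^ k = y ^ (2 * k)" by (simp add: power_mult)
    also have "\<dots> = y powr (real (2 * k))" using yp by (rule powr_realpow[symmetric])
    also have "\<dots> = y powr (alpha + (2 * real k - alpha))" by simp
    also have "\<dots> = y powr alpha * y powr (2 * real k - alpha)"
      by (rule powr_add)
    also have "\<dots> \<le> y powr alpha * (2*pi) powr (2 * real k - alpha)"
      using ka assms by (intro mult_left_mono powr_mono2) auto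
    finally show ?thesis by (simp only: mult.commute)
  qed
  finally have *: "(1 - cos y') ^ k \<le> (2*pi) powr (2 * real k - alpha) * y powr alpha" .
  have "((1 - cos y') / D) ^ k = (1 - cos y') ^ k / D ^ k" by (rule power_divide)
  also have "\<dots> \<le> ((2*pi) powr (2 * real k - alpha) * y powr alpha) / D ^ k"
    using * assms(2) by (intro divide_right_mono) auto
  also have "\<dots> = ((2*pi) powr (2 * real k - alpha) / D ^ k) * y powr alpha" by simp
  finally show ?thesis .
qed


theorem lemma5p5:
  fixes h :: "real \<Rightarrow> real" and r :: nat and lam alpha :: "nat \<Rightarrow> real"
    and g :: "real \<Rightarrow> real" and \<epsilon> :: real
  assumes lam_range: "\<forall>j\<in>{1..r}. lam j \<in> {-pi..pi}"
    and alpha_nonneg: "\<forall>j\<in>{1..r}. alpha j \<ge> 0"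
    and h_nonneg: "\<forall>x\<in>{-pi..pi}. h x \<ge> 0"
    and h_meas: "h \<in> borel_measurable (restrict_space lborel {-pi..pi})"
    and h_int: "set_integrable lborel {-pi..pi} h"
    and h_cont: "continuous (at 0 within {-pi..pi}) h"
    and h_lower: "\<exists>c>0. \<forall>x\<in>{-pi..pi}. h x \<ge> c"
    and g_def: "\<forall>x\<in>{-pi..pi}. g x = h x * (\<Prod>j\<in>{1..r}. rpow0 \<bar>x - lam j\<bar> (alpha j))"
    and eps: "\<epsilon> > 0"
  shows "\<exists>t. trig_poly t \<and> (\<forall>x\<in>{-pi..pi}. 0 \<le> t x \<and> t x \<le> g x) \<and> t 0 \<ge> g 0 - \<epsilon>"
proof -
  define S where "S = {-pi..pi}"
  define R where "R x = (\<Prod>j\<in>{1..r}. rpow0 \<bar>x - lam j\<bar> (alpha j))" for x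
  have R_nonneg: "R x \<ge> 0" for x
    unfolding R_def rpow0_def by (intro prod_nonneg) auto
  have g_eq: "g x = h x * R x" if "x \<in> S" for x
    using g_def that unfolding S_def R_def by auto
  obtain c where c: "c > 0" "\<forall>x\<in>S. h x \<ge> c" using h_lower unfolding S_def by blast
  have g_nonneg: "g x \<ge> 0" if "x \<in> S" for x
    using g_eq[OF that] h_nonneg that R_nonneg unfolding S_def by auto
  have S0: "0 \<in> S" unfolding S_def by auto
  show ?thesis
  proof (cases "g 0 \<le> \<epsilon>")
    case True
    show ?thesis
      by (rule exI[of _ "\<lambda>x. 0"]) (use True g_nonneg trig_poly_const[of 0] in \<open>auto simp: S_def\<close>)
  next
    case False
    define A where "A = g 0 - \<epsilon>"
    have A_pos: "A > 0" using False unfolding A_def by simp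
    have R0: "R 0 \<noteq> 0" using g_eq[OF S0] False eps by auto
    have lam_nz: "lam j \<noteq> 0" if "j \<in> {1..r}" "alpha j > 0" for j
    proof
      assume "lam j = 0"
      then have "rpow0 \<bar>0 - lam j\<bar> (alpha j) = 0" using that unfolding rpow0_def by simp
      then have "R 0 = 0" unfolding R_def using that by (intro prod_zero) auto
      with R0 show False by simp
    qed
    define k where "k j = nat \<lceil>alpha j\<rceil>" for j
    define D where "D j = 1 - cos (lam j)" for j
    have D_nonneg: "D j \<ge> 0" for j unfolding D_def using cos_le_one[of "lam j"] by linarith
    have D_pos: "D j > 0" if "j \<in> {1..r}" "alpha j > 0" for j
      using cos_lt_1_pi[of "lam j"] lam_nz[OF that] lam_range that unfolding D_def by auto
    have k0: "k j = 0" if "alpha j = 0" for j unfolding k_def using that by simp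
    define F where "F j x = ((1 - cos (x - lam j)) / D j) ^ k j" for j x
    define Q where "Q x = (\<Prod>j\<in>{1..r}. F j x)" for x
    have F_nonneg: "F j x \<ge> 0" for j x
      unfolding F_def using cos_le_one[of "x - lam j"] D_nonneg[of j] by (intro zero_le_power divide_nonneg_nonneg) auto
    have Q_nonneg: "Q x \<ge> 0" for x unfolding Q_def using F_nonneg by (intro prod_nonneg) auto
    have F0: "F j 0 = 1" if "j \<in> {1..r}" for j
    proof (cases "alpha j = 0")
      case True then show ?thesis unfolding F_def using k0 by simp
    next
      case False
      then have "alpha j > 0" using alpha_nonneg that by force
      then have "D j > 0" using D_pos that by blast
      then show ?thesis unfolding F_def D_def by simp
    qed
    have Q0: "Q 0 = 1" unfolding Q_def using F0 by simp
    define M where "M j = (if alpha j = 0 then 1 else (2*pi) powr (2 * real (k j) - alpha j) / D j ^ k j)" for j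
    have M_nonneg: "M j \<ge> 0" for j unfolding M_def using D_nonneg by auto
    have F_bound: "F j x \<le> M j * rpow0 \<bar>x - lam j\<bar> (alpha j)" if "j \<in> {1..r}" "x \<in> S" for j x
    proof (cases "alpha j = 0")
      case True then show ?thesis unfolding F_def M_def rpow0_def using k0 by simp
    next
      case False
      then have ap: "alpha j > 0" using alpha_nonneg that by force
      have "lam j \<in> {-pi..pi}" using that lam_range by auto
      then have "\<bar>x - lam j\<bar> \<le> 2 * pi" using that unfolding S_def by (auto simp: abs_le_iff)
      then have "F j x \<le> ((2*pi) powr (2 * real (k j) - alpha j) / D j ^ k j) * \<bar>x - lam j\<bar> powr alpha j"
        unfolding F_def using ap D_pos[OF that(1) ap]
        by (intro factor_bound) (auto simp: k_def)
      then show ?thesis unfolding M_def rpow0_def using False by simp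
    qed
    define MM where "MM = (\<Prod>j\<in>{1..r}. M j)"
    have MM_nonneg: "MM \<ge> 0" unfolding MM_def using M_nonneg by (intro prod_nonneg) auto
    have Q_bound: "Q x \<le> MM * R x" if "x \<in> S" for x
    proof -
      have "Q x \<le> (\<Prod>j\<in>{1..r}. M j * rpow0 \<bar>x - lam j\<bar> (alpha j))"
        unfolding Q_def using F_nonneg F_bound that by (intro prod_mono) auto
      also have "\<dots> = MM * R x" unfolding MM_def R_def by (rule prod.distrib)
      finally show ?thesis .
    qed
    
    define \<psi> where "\<psi> x = h x * R x - A * Q x" for x
    have R_cont: "continuous (at 0 within S) R"
      unfolding R_def
    proof (intro continuous_prod)
      fix j assume j: "j \<in> {1..r}"
      show "continuous (at 0 within S) (\<lambda>x. rpow0 \<bar>x - lam j\<bar> (alpha j))"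
      proof (cases "alpha j = 0")
        case True then show ?thesis unfolding rpow0_def by simp
      next
        case False
        then have ap: "alpha j > 0" using alpha_nonneg j by force
        have "continuous (at 0 within S) (\<lambda>x. \<bar>x - lam j\<bar> powr alpha j)"
          using ap by (intro continuous_powr_real continuous_intros) auto
        then show ?thesis unfolding rpow0_def using False by simp
      qed
    qed
    have F_alt: "F j = (\<lambda>x. ((1 / D j) * (1 + (-1) * cos (x - lam j))) ^ k j)" for j
      unfolding F_def by (auto simp: divide_inverse mult.commute)
    have Q_cont: "continuous (at 0 within S) Q"
      unfolding Q_def F_alt by (intro continuous_intros)
    have psi_cont: "continuous (at 0 within S) \<psi>"
      unfolding \<psi>_def using h_cont R_cont Q_cont unfolding S_def
      by (intro continuous_intros) auto
    have psi0: "\<psi> 0 = \<epsilon>" unfolding \<psi>_def A_def using g_eq[OF S0] Q0 by simp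
    have "(\<psi> \<longlongrightarrow> \<psi> 0) (at 0 within S)" using psi_cont by (simp add: continuous_within)
    then have "\<forall>\<^sub>F x in at 0 within S. \<psi> x > 0" using psi0 eps by (intro order_tendstoD(1)) auto
    then obtain d where d: "d > 0" "\<forall>x\<in>S. x \<noteq> 0 \<and> dist x 0 < d \<longrightarrow> \<psi> x > 0"
      unfolding eventually_at by (elim exE conjE) (rule that)
    have near: "A * Q x \<le> g x" if "x \<in> S" "\<bar>x\<bar> < d" for x
    proof (cases "x = 0")
      case True then show ?thesis using Q0 A_def eps by simp
    next
      case False
      then have "\<psi> x > 0" using d that by auto
      then show ?thesis unfolding \<psi>_def using g_eq[OF that(1)] by simp
    qed
    define \<delta> where "\<delta> = min d pi"
    have \<delta>: "\<delta> > 0" "\<delta> \<le> pi" "\<delta> \<le> d" unfolding \<delta>_def using d pi_gt_zero by auto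
    define \<rho> where "\<rho> = (1 + cos \<delta>) / 2"
    have cd: "cos \<delta> < 1" using cos_monotone_0_pi[of 0 \<delta>] \<delta> by simp
    have cm: "-1 \<le> cos \<delta>" by (rule cos_ge_minus_one)
    have cm2: "0 \<le> 1 + cos \<delta>" using cm by linarith
    have \<rho>: "\<rho> \<ge> 0" "\<rho> < 1" unfolding \<rho>_def using cd cm2 by simp_all
    have "c / (A * (MM + 1)) > 0" using c A_pos MM_nonneg by auto
    then obtain N where N: "\<rho> ^ N < c / (A * (MM + 1))" using real_arch_pow_inv \<rho> by blast
    define t where "t x = A * ((1 + cos x) / 2) ^ N * Q x" for x
    have tp_F: "trig_poly (F j)" for j
    proof -
      have "F j = (\<lambda>x. ((1 / D j) * (1 + (-1) * cos (x - lam j))) ^ k j)"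
        unfolding F_def by (auto simp: divide_inverse mult.commute)
      then show ?thesis
        by (simp only:) (intro trig_poly_power trig_poly_scale trig_poly_add trig_poly_const trig_poly_cos_shift)
    qed
    have tp: "trig_poly t"
    proof -
      have e1: "(\<lambda>x. (1 + cos x) / 2) = (\<lambda>x. (1/2) * (1 + cos (real (1::nat) * x)))" by auto
      have "trig_poly (\<lambda>x. (1 + cos x) / 2)" unfolding e1
        by (intro trig_poly_scale trig_poly_add trig_poly_const trig_poly_cos_nat)
      then have "trig_poly (\<lambda>x. ((1 + cos x) / 2) ^ N)" by (rule trig_poly_power)
      then have "trig_poly (\<lambda>x. A * ((1 + cos x) / 2) ^ N)" by (rule trig_poly_scale)
      moreover have "trig_poly Q" unfolding Q_def using tp_F by (intro trig_poly_prod) auto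
      ultimately have "trig_poly (\<lambda>x. A * ((1 + cos x) / 2) ^ N * Q x)" by (rule trig_poly_mult)
      then show ?thesis unfolding t_def .
    qed
    have base_nonneg: "0 \<le> (1 + cos x) / 2" for x :: real
    proof - have "0 \<le> 1 + cos x" using cos_ge_minus_one[of x] by linarith then show ?thesis by simp qed
    have base_le1: "(1 + cos x) / 2 \<le> 1" for x :: real
    proof - have "1 + cos x \<le> 2" using cos_le_one[of x] by linarith then show ?thesis by simp qed
    have t_nonneg: "t x \<ge> 0" for x unfolding t_def using A_pos base_nonneg Q_nonneg by simp
    have t0: "t 0 = A" unfolding t_def using Q0 by simp
    have t_le: "t x \<le> g x" if x: "x \<in> S" for x
    proof (cases "\<bar>x\<bar> < d")
      case True
      have "t x = (((1 + cos x) / 2) ^ N) * (A * Q x)" unfolding t_def by simp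
      also have "\<dots> \<le> 1 * (A * Q x)"
        using base_nonneg base_le1 A_pos Q_nonneg by (intro mult_right_mono power_le_one) auto
      also have "\<dots> \<le> g x" using near[OF x True] by simp
      finally show ?thesis .
    next
      case False
      have xa: "\<delta> \<le> \<bar>x\<bar>" "\<bar>x\<bar> \<le> pi" using False \<delta> x unfolding S_def by auto
      have "cos x = cos \<bar>x\<bar>" by (simp add: abs_if)
      also have "\<dots> \<le> cos \<delta>" using xa \<delta> by (intro cos_monotone_0_pi_le) auto
      finally have "(1 + cos x) / 2 \<le> \<rho>" unfolding \<rho>_def by simp
      then have pw: "((1 + cos x) / 2) ^ N \<le> \<rho> ^ N" using base_nonneg by (intro power_mono) auto
      have "t x = A * ((1 + cos x) / 2) ^ N * Q x" unfolding t_def ..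
      also have "\<dots> \<le> A * \<rho> ^ N * (MM * R x)"
        using A_pos pw Q_bound[OF x] Q_nonneg base_nonneg \<rho>(1)
        by (intro mult_mono) auto
      also have "\<dots> \<le> A * \<rho> ^ N * ((MM + 1) * R x)"
        using A_pos \<rho> R_nonneg by (intro mult_left_mono mult_right_mono) auto
      also have "\<dots> = (\<rho> ^ N * (A * (MM + 1))) * R x" by (simp add: algebra_simps)
      also have "\<dots> \<le> c * R x"
      proof -
        have "\<rho> ^ N * (A * (MM + 1)) \<le> c"
          using N A_pos MM_nonneg by (simp add: pos_less_divide_eq less_imp_le)
        then show ?thesis using R_nonneg by (intro mult_right_mono) auto
      qed
      also have "\<dots> \<le> h x * R x" using c x R_nonneg by (intro mult_right_mono) auto
      also have "\<dots> = g x" using g_eq[OF x] by simp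
      finally show ?thesis .
    qed
    show ?thesis
      using tp t_nonneg t_le t0 unfolding A_def S_def by (intro exI[of _ t]) auto
  qed
qed

end
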